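(* Let $(\mathbb{C},\mathcal{N})$ be a star-regular category satisfying property $( * )$. Let $F^*\rightrightarrows A$ and $G^*\rightrightarrows A$ be kernel stars with $F^*\subseteq G^*$, with coequalisers $f\colon A\to A/F^*$ and $g\colon A\to A/G^*$. Then $f(G^* )\rightrightarrows A/F^*$ is a kernel star, the unique morphism $q\colon A/F^*\to A/G^*$ with $qf=g$ is a coequaliser of $f(G^* )$, and hence $$A/G^*\;\cong\;\frac{A/F^*}{f(G^* )}.$$
   Context: Throughout, $\mathbb{C}$ is a finitely complete regular category with an ideal of morphisms $\mathcal{N}$ (a class such that $gf\in\mathcal{N}$ whenever $f\in\mathcal{N}$ or $g\in\mathcal{N}$). A star on $X$ is a pair of parallel morphisms $\tau=(\tau_1,\tau_2)\colon T\rightrightarrows X$ with $\tau_1\in\mathcal{N}$; monic if jointly monic. For stars $\sigma\colon S\rightrightarrows X$, $\tau\colon T\rightrightarrows X$, write $S\subseteq T$ if there is $h\colon S\to T$ with $\tau_ih=\sigma_i$. An $\mathcal{N}$-kernel of $f$ is a morphism $k$ into its domain with $fk\in\mathcal{N}$, universal with this property. For a relation $\rho=(\rho_1,\rho_2)$, $\rho^*=(\rho_1k,\rho_2k)$ with $k$ the $\mathcal{N}$-kernel of $\rho_1$. The kernel star of $f\colon X\to Y$ (capital letter $F^*$) is $Eq(f)^*$ for $Eq(f)$ the kernel pair of $f$; a kernel star on $X$ is the kernel star of some morphism with domain $X$. Every star factors uniquely up to isomorphism as a regular epimorphism followed by a monic star; for $f\colon X\to Y$ and a star $\lambda$ on $X$,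 $f(\lambda)$ is the monic star part of the factorisation of $(f\lambda_1,f\lambda_2)$. A star-regular category is a regular multi-pointed category with $\mathcal{N}$-kernels in which every regular epimorphism is a coequaliser of some star; there every kernel star $F^*$ on $A$ has a coequaliser $A\to A/F^*$, and $X/S$ denotes the codomain of the coequaliser of a star $S$ on $X$. Property $( * )$: for every kernel star $F^*\rightrightarrows A$ with coequaliser $f$ and every kernel star $G^*\rightrightarrows A$ with $F^*\subseteq G^*$, the star $f(G^* )\rightrightarrows A/F^*$ is a kernel star. *)

theory Defs
  imports Main
begin

text \<open>Categories are encoded concretely: objects of type 'o, arrows of type 'a,
  with a carrier of arrows. Comp C g f denotes g composed after f.\<close>

record ('o, 'a) cat =
  Obj  :: "'o set"
  Arr  :: "'a set"
  Dom  :: "'a \<Rightarrow> 'o"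
  Cod  :: "'a \<Rightarrow> 'o"
  Id   :: "'o \<Rightarrow> 'a"
  Comp :: "'a \<Rightarrow> 'a \<Rightarrow> 'a"

definition category :: "('o, 'a) cat \<Rightarrow> bool" where
  "category C \<longleftrightarrow>
     (\<forall>f\<in>Arr C. Dom C f \<in> Obj C \<and> Cod C f \<in> Obj C) \<and>
     (\<forall>X\<in>Obj C. Id C X \<in> Arr C \<and> Dom C (Id C X) = X \<and> Cod C (Id C X) = X) \<and>
     (\<forall>f g. f \<in> Arr C \<and> g \<in> Arr C \<and> Cod C f = Dom C g \<longrightarrow>
        Comp C g f \<in> Arr C \<and> Dom C (Comp C g f) = Dom C f \<and> Cod C (Comp C g f) = Cod C g) \<and>
     (\<forall>f\<in>Arr C. Comp C f (Id C (Dom C f)) = f \<and> Comp C (Id C (Cod C f)) f = f) \<and>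
     (\<forall>f g h. f \<in> Arr C \<and> g \<in> Arr C \<and> h \<in> Arr C \<and> Cod C f = Dom C g \<and> Cod C g = Dom C h \<longrightarrow>
        Comp C h (Comp C g f) = Comp C (Comp C h g) f)"

definition hom :: "('o, 'a) cat \<Rightarrow> 'a \<Rightarrow> 'o \<Rightarrow> 'o \<Rightarrow> bool" where
  "hom C f X Y \<longleftrightarrow> f \<in> Arr C \<and> Dom C f = X \<and> Cod C f = Y"

definition iso_arr :: "('o, 'a) cat \<Rightarrow> 'a \<Rightarrow> bool" where
  "iso_arr C f \<longleftrightarrow> f \<in> Arr C \<and> (\<exists>g. hom C g (Cod C f) (Dom C f) \<and>
      Comp C g f = Id C (Dom C f) \<and> Comp C f g = Id C (Cod C f))"

definition iso_obj :: "('o, 'a) cat \<Rightarrow> 'o \<Rightarrow> 'o \<Rightarrow> bool" where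
  "iso_obj C X Y \<longleftrightarrow> (\<exists>f. hom C f X Y \<and> iso_arr C f)"

definition jointly_monic :: "('o, 'a) cat \<Rightarrow> 'a \<Rightarrow> 'a \<Rightarrow> bool" where
  "jointly_monic C s1 s2 \<longleftrightarrow> s1 \<in> Arr C \<and> s2 \<in> Arr C \<and> Dom C s1 = Dom C s2 \<and>
     (\<forall>a b. a \<in> Arr C \<and> b \<in> Arr C \<and> Dom C a = Dom C b \<and> Cod C a = Dom C s1 \<and> Cod C b = Dom C s1 \<and>
        Comp C s1 a = Comp C s1 b \<and> Comp C s2 a = Comp C s2 b \<longrightarrow> a = b)"

definition is_coequaliser :: "('o, 'a) cat \<Rightarrow> 'a \<Rightarrow> 'a \<Rightarrow> 'a \<Rightarrow> bool" where
  "is_coequaliser C s1 s2 c \<longleftrightarrow>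
     s1 \<in> Arr C \<and> s2 \<in> Arr C \<and> c \<in> Arr C \<and> Dom C s1 = Dom C s2 \<and>
     Cod C s1 = Dom C c \<and> Cod C s2 = Dom C c \<and> Comp C c s1 = Comp C c s2 \<and>
     (\<forall>h. h \<in> Arr C \<and> Dom C h = Dom C c \<and> Comp C h s1 = Comp C h s2 \<longrightarrow>
        (\<exists>!u. hom C u (Cod C c) (Cod C h) \<and> Comp C u c = h))"

definition regular_epi :: "('o, 'a) cat \<Rightarrow> 'a \<Rightarrow> bool" where
  "regular_epi C e \<longleftrightarrow> (\<exists>s1 s2. is_coequaliser C s1 s2 e)"

definition is_pullback :: "('o, 'a) cat \<Rightarrow> 'a \<Rightarrow> 'a \<Rightarrow> 'a \<Rightarrow> 'a \<Rightarrow> bool" where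
  "is_pullback C f g p1 p2 \<longleftrightarrow>
     f \<in> Arr C \<and> g \<in> Arr C \<and> p1 \<in> Arr C \<and> p2 \<in> Arr C \<and> Cod C f = Cod C g \<and>
     Dom C p1 = Dom C p2 \<and> Cod C p1 = Dom C f \<and> Cod C p2 = Dom C g \<and>
     Comp C f p1 = Comp C g p2 \<and>
     (\<forall>a b. a \<in> Arr C \<and> b \<in> Arr C \<and> Dom C a = Dom C b \<and> Cod C a = Dom C f \<and> Cod C b = Dom C g \<and>
        Comp C f a = Comp C g b \<longrightarrow>
        (\<exists>!u. hom C u (Dom C a) (Dom C p1) \<and> Comp C p1 u = a \<and> Comp C p2 u = b))"

definition kernel_pair :: "('o, 'a) cat \<Rightarrow> 'a \<Rightarrow> 'a \<Rightarrow> 'a \<Rightarrow> bool" where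
  "kernel_pair C f p1 p2 \<longleftrightarrow> is_pullback C f f p1 p2"

definition terminal :: "('o, 'a) cat \<Rightarrow> 'o \<Rightarrow> bool" where
  "terminal C T \<longleftrightarrow> T \<in> Obj C \<and> (\<forall>X\<in>Obj C. \<exists>!u. hom C u X T)"

definition finitely_complete :: "('o, 'a) cat \<Rightarrow> bool" where
  "finitely_complete C \<longleftrightarrow> category C \<and> (\<exists>T. terminal C T) \<and>
     (\<forall>f g. f \<in> Arr C \<and> g \<in> Arr C \<and> Cod C f = Cod C g \<longrightarrow> (\<exists>p1 p2. is_pullback C f g p1 p2))"

definition regular_category :: "('o, 'a) cat \<Rightarrow> bool" where
  "regular_category C \<longleftrightarrow> finitely_complete C \<and>
     (\<forall>f p1 p2. kernel_pair C f p1 p2 \<longrightarrow> (\<exists>c. is_coequaliser C p1 p2 c)) \<and>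
     (\<forall>e g p1 p2. regular_epi C e \<and> is_pullback C e g p1 p2 \<longrightarrow> regular_epi C p2)"

definition ideal :: "('o, 'a) cat \<Rightarrow> 'a set \<Rightarrow> bool" where
  "ideal C N \<longleftrightarrow> N \<subseteq> Arr C \<and>
     (\<forall>f g. f \<in> Arr C \<and> g \<in> Arr C \<and> Cod C f = Dom C g \<and> (f \<in> N \<or> g \<in> N) \<longrightarrow> Comp C g f \<in> N)"

definition is_N_kernel :: "('o, 'a) cat \<Rightarrow> 'a set \<Rightarrow> 'a \<Rightarrow> 'a \<Rightarrow> bool" where
  "is_N_kernel C N f k \<longleftrightarrow> f \<in> Arr C \<and> k \<in> Arr C \<and> Cod C k = Dom C f \<and> Comp C f k \<in> N \<and>
     (\<forall>m. m \<in> Arr C \<and> Cod C m = Dom C f \<and> Comp C f m \<in> N \<longrightarrow>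
        (\<exists>!h. hom C h (Dom C m) (Dom C k) \<and> Comp C k h = m))"

definition has_N_kernels :: "('o, 'a) cat \<Rightarrow> 'a set \<Rightarrow> bool" where
  "has_N_kernels C N \<longleftrightarrow> (\<forall>f\<in>Arr C. \<exists>k. is_N_kernel C N f k)"

definition is_star :: "('o, 'a) cat \<Rightarrow> 'a set \<Rightarrow> 'o \<Rightarrow> 'a \<Rightarrow> 'a \<Rightarrow> bool" where
  "is_star C N X t1 t2 \<longleftrightarrow> t1 \<in> Arr C \<and> t2 \<in> Arr C \<and> Dom C t1 = Dom C t2 \<and>
     Cod C t1 = X \<and> Cod C t2 = X \<and> t1 \<in> N"

definition star_le :: "('o, 'a) cat \<Rightarrow> 'a \<times> 'a \<Rightarrow> 'a \<times> 'a \<Rightarrow> bool" where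
  "star_le C S T \<longleftrightarrow> (\<exists>h. hom C h (Dom C (fst S)) (Dom C (fst T)) \<and>
     Comp C (fst T) h = fst S \<and> Comp C (snd T) h = snd S)"

text \<open>(s1,s2) is (a representative of) the kernel star F* of f.\<close>
definition kernel_star_of :: "('o, 'a) cat \<Rightarrow> 'a set \<Rightarrow> 'a \<Rightarrow> 'a \<times> 'a \<Rightarrow> bool" where
  "kernel_star_of C N f S \<longleftrightarrow> (\<exists>p1 p2 k. kernel_pair C f p1 p2 \<and> is_N_kernel C N p1 k \<and>
     fst S = Comp C p1 k \<and> snd S = Comp C p2 k)"

definition kernel_star_on :: "('o, 'a) cat \<Rightarrow> 'a set \<Rightarrow> 'o \<Rightarrow> 'a \<times> 'a \<Rightarrow> bool" where
  "kernel_star_on C N X S \<longleftrightarrow> (\<exists>f. f \<in> Arr C \<and> Dom C f = X \<and> kernel_star_of C N f S)"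

definition image_star :: "('o, 'a) cat \<Rightarrow> 'a \<Rightarrow> 'a \<times> 'a \<Rightarrow> 'a \<times> 'a \<Rightarrow> bool" where
  "image_star C f L M \<longleftrightarrow> (\<exists>e. regular_epi C e \<and> Dom C e = Dom C (fst L) \<and>
     hom C (fst M) (Cod C e) (Cod C f) \<and> hom C (snd M) (Cod C e) (Cod C f) \<and>
     jointly_monic C (fst M) (snd M) \<and>
     Comp C (fst M) e = Comp C f (fst L) \<and> Comp C (snd M) e = Comp C f (snd L))"

definition star_regular :: "('o, 'a) cat \<Rightarrow> 'a set \<Rightarrow> bool" where
  "star_regular C N \<longleftrightarrow> regular_category C \<and> ideal C N \<and> has_N_kernels C N \<and>
     (\<forall>e. regular_epi C e \<longrightarrow> (\<exists>s1 s2. is_star C N (Dom C e) s1 s2 \<and> is_coequaliser C s1 s2 e))"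

definition property_star :: "('o, 'a) cat \<Rightarrow> 'a set \<Rightarrow> bool" where
  "property_star C N \<longleftrightarrow> (\<forall>A F G f. kernel_star_on C N A F \<and> kernel_star_on C N A G \<and>
     star_le C F G \<and> is_coequaliser C (fst F) (snd F) f \<longrightarrow>
     (\<forall>M. image_star C f G M \<longrightarrow> kernel_star_on C N (Cod C f) M))"

end

theory Submission
  imports Defs
begin

locale cat =
  fixes C :: "('o, 'a) cat"
  assumes cat: "category C"
begin

lemma comp_arr [intro, simp]: "f \<in> Arr C \<Longrightarrow> g \<in> Arr C \<Longrightarrow> Cod C f = Dom C g \<Longrightarrow> Comp C g f \<in> Arr C"
  using cat unfolding category_def by blast
lemma dom_comp [simp]: "f \<in> Arr C \<Longrightarrow> g \<in> Arr C \<Longrightarrow> Cod C f = Dom C g \<Longrightarrow> Dom C (Comp C g f) = Dom C f"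
  using cat unfolding category_def by blast
lemma cod_comp [simp]: "f \<in> Arr C \<Longrightarrow> g \<in> Arr C \<Longrightarrow> Cod C f = Dom C g \<Longrightarrow> Cod C (Comp C g f) = Cod C g"
  using cat unfolding category_def by blast
lemma assoc: "f \<in> Arr C \<Longrightarrow> g \<in> Arr C \<Longrightarrow> h \<in> Arr C \<Longrightarrow> Cod C f = Dom C g \<Longrightarrow> Cod C g = Dom C h \<Longrightarrow>
   Comp C h (Comp C g f) = Comp C (Comp C h g) f"
  using cat unfolding category_def by blast
lemma id_l: "f \<in> Arr C \<Longrightarrow> Comp C (Id C (Cod C f)) f = f"
  using cat unfolding category_def by blast
lemma id_arr: "f \<in> Arr C \<Longrightarrow> Id C (Cod C f) \<in> Arr C \<and> Dom C (Id C (Cod C f)) = Cod C f \<and> Cod C (Id C (Cod C f)) = Cod C f"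
  using cat unfolding category_def by blast
lemma arr_obj: "f \<in> Arr C \<Longrightarrow> Dom C f \<in> Obj C \<and> Cod C f \<in> Obj C"
  using cat unfolding category_def by blast

lemma coeq_epi:
  assumes c: "is_coequaliser C s1 s2 c"
    and a: "a \<in> Arr C" and b: "b \<in> Arr C" and "Dom C a = Cod C c" "Dom C b = Cod C c"
    and "Cod C a = Cod C b" and eq: "Comp C a c = Comp C b c"
  shows "a = b"
proof -
  have cc: "s1 \<in> Arr C" "s2 \<in> Arr C" "c \<in> Arr C" "Cod C s1 = Dom C c" "Cod C s2 = Dom C c"
    "Comp C c s1 = Comp C c s2"
    and U: "\<And>h. h \<in> Arr C \<Longrightarrow> Dom C h = Dom C c \<Longrightarrow> Comp C h s1 = Comp C h s2 \<Longrightarrow>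
        (\<exists>!u. hom C u (Cod C c) (Cod C h) \<and> Comp C u c = h)"
    using c unfolding is_coequaliser_def by blast+
  let ?h = "Comp C a c"
  have "Comp C ?h s1 = Comp C a (Comp C c s1)" by (rule assoc[symmetric]) (use cc assms in auto)
  also have "\<dots> = Comp C a (Comp C c s2)" using cc by simp
  also have "\<dots> = Comp C ?h s2" by (rule assoc) (use cc assms in auto)
  finally have "Comp C ?h s1 = Comp C ?h s2" .
  moreover have "?h \<in> Arr C" "Dom C ?h = Dom C c" using cc assms by auto
  ultimately have "\<exists>!u. hom C u (Cod C c) (Cod C ?h) \<and> Comp C u c = ?h" using U by blast
  moreover have "Cod C ?h = Cod C a" using cc assms by auto
  ultimately show ?thesis using assms unfolding hom_def by metis
qed

lemma regepi_epi:
  assumes "regular_epi C c" "a \<in> Arr C" "b \<in> Arr C" "Dom C a = Cod C c" "Dom C b = Cod C c"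
    "Cod C a = Cod C b" "Comp C a c = Comp C b c"
  shows "a = b"
  using assms coeq_epi unfolding regular_epi_def by blast

lemma regepi_arr: "regular_epi C c \<Longrightarrow> c \<in> Arr C"
  unfolding regular_epi_def is_coequaliser_def by blast

lemma coeq_iso:
  assumes q: "is_coequaliser C s1 s2 q" and c: "is_coequaliser C s1 s2 c"
  shows "iso_obj C (Cod C q) (Cod C c)"
proof -
  have qq: "s1 \<in> Arr C" "s2 \<in> Arr C" "q \<in> Arr C" "Cod C s1 = Dom C q" "Cod C s2 = Dom C q"
    "Comp C q s1 = Comp C q s2"
    and Uq: "\<And>h. h \<in> Arr C \<Longrightarrow> Dom C h = Dom C q \<Longrightarrow> Comp C h s1 = Comp C h s2 \<Longrightarrow>
        (\<exists>!u. hom C u (Cod C q) (Cod C h) \<and> Comp C u q = h)"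
    using q unfolding is_coequaliser_def by blast+
  have cc: "c \<in> Arr C" "Cod C s1 = Dom C c" "Cod C s2 = Dom C c"
    "Comp C c s1 = Comp C c s2"
    and Uc: "\<And>h. h \<in> Arr C \<Longrightarrow> Dom C h = Dom C c \<Longrightarrow> Comp C h s1 = Comp C h s2 \<Longrightarrow>
        (\<exists>!u. hom C u (Cod C c) (Cod C h) \<and> Comp C u c = h)"
    using c unfolding is_coequaliser_def by blast+
  obtain u where u: "hom C u (Cod C q) (Cod C c)" "Comp C u q = c"
    using Uq[of c] cc qq by auto
  obtain v where v: "hom C v (Cod C c) (Cod C q)" "Comp C v c = q"
    using Uc[of q] cc qq by auto
  have vu: "Comp C v u = Id C (Cod C q)"
  proof (rule coeq_epi[OF q])
    show "Comp C (Comp C v u) q = Comp C (Id C (Cod C q)) q"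
    proof -
      have uu: "u \<in> Arr C" "Dom C u = Cod C q" "Cod C u = Cod C c" and vv: "v \<in> Arr C" "Dom C v = Cod C c" "Cod C v = Cod C q"
        using u(1) v(1) by (auto simp: hom_def)
      have "Comp C (Comp C v u) q = Comp C v (Comp C u q)" by (rule assoc[symmetric]) (use uu vv qq in auto)
      also have "\<dots> = q" using u v by simp
      also have "\<dots> = Comp C (Id C (Cod C q)) q" using id_l qq by simp
      finally show ?thesis .
    qed
  qed (use u v qq id_arr in \<open>auto simp: hom_def\<close>)
  have uv: "Comp C u v = Id C (Cod C c)"
  proof (rule coeq_epi[OF c])
    show "Comp C (Comp C u v) c = Comp C (Id C (Cod C c)) c"
    proof -
      have uu: "u \<in> Arr C" "Dom C u = Cod C q" "Cod C u = Cod C c" and vv: "v \<in> Arr C" "Dom C v = Cod C c" "Cod C v = Cod C q"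
        using u(1) v(1) by (auto simp: hom_def)
      have "Comp C (Comp C u v) c = Comp C u (Comp C v c)" by (rule assoc[symmetric]) (use uu vv cc in auto)
      also have "\<dots> = c" using u v by simp
      also have "\<dots> = Comp C (Id C (Cod C c)) c" using id_l cc by simp
      finally show ?thesis .
    qed
  qed (use u v cc id_arr in \<open>auto simp: hom_def\<close>)
  show ?thesis unfolding iso_obj_def iso_arr_def
    by (intro exI[of _ u] conjI exI[of _ v]) (use u(1) v(1) uv vu in \<open>auto simp: hom_def\<close>)
qed

lemma jm_eq: "jointly_monic C s1 s2 \<Longrightarrow> a \<in> Arr C \<Longrightarrow> b \<in> Arr C \<Longrightarrow> Dom C a = Dom C b \<Longrightarrow>
  Cod C a = Dom C s1 \<Longrightarrow> Cod C b = Dom C s1 \<Longrightarrow> Comp C s1 a = Comp C s1 b \<Longrightarrow> Comp C s2 a = Comp C s2 b \<Longrightarrow> a = b"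
  unfolding jointly_monic_def by blast

lemma pullback_jm: "is_pullback C f g p1 p2 \<Longrightarrow> jointly_monic C p1 p2"
  unfolding jointly_monic_def
proof (intro conjI allI impI)
  fix x y assume P: "is_pullback C f g p1 p2" and
    H: "x \<in> Arr C \<and> y \<in> Arr C \<and> Dom C x = Dom C y \<and> Cod C x = Dom C p1 \<and> Cod C y = Dom C p1 \<and>
        Comp C p1 x = Comp C p1 y \<and> Comp C p2 x = Comp C p2 y"
  have pp: "f \<in> Arr C" "g \<in> Arr C" "p1 \<in> Arr C" "p2 \<in> Arr C" "Dom C p1 = Dom C p2"
    "Cod C p1 = Dom C f" "Cod C p2 = Dom C g" "Comp C f p1 = Comp C g p2"
    and U: "\<And>a b. a \<in> Arr C \<Longrightarrow> b \<in> Arr C \<Longrightarrow> Dom C a = Dom C b \<Longrightarrow> Cod C a = Dom C f \<Longrightarrow> Cod C b = Dom C g \<Longrightarrow>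
        Comp C f a = Comp C g b \<Longrightarrow>
        (\<exists>!u. hom C u (Dom C a) (Dom C p1) \<and> Comp C p1 u = a \<and> Comp C p2 u = b)"
    using P unfolding is_pullback_def by blast+
  let ?a = "Comp C p1 x" and ?b = "Comp C p2 x"
  have "Comp C f ?a = Comp C (Comp C f p1) x" by (rule assoc) (use pp H in auto)
  also have "\<dots> = Comp C (Comp C g p2) x" using pp by simp
  also have "\<dots> = Comp C g ?b" by (rule assoc[symmetric]) (use pp H in auto)
  finally have e1: "Comp C f ?a = Comp C g ?b" .
  have e2: "?a \<in> Arr C" "?b \<in> Arr C" "Dom C ?a = Dom C ?b" "Cod C ?a = Dom C f" "Cod C ?b = Dom C g"
    using pp H by auto
  have ex: "\<exists>!u. hom C u (Dom C ?a) (Dom C p1) \<and> Comp C p1 u = ?a \<and> Comp C p2 u = ?b"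
    by (rule U[OF e2 e1])
  have da: "Dom C ?a = Dom C x" using pp H by auto
  have hx: "hom C x (Dom C ?a) (Dom C p1) \<and> Comp C p1 x = ?a \<and> Comp C p2 x = ?b"
    using H da by (simp add: hom_def)
  have hy: "hom C y (Dom C ?a) (Dom C p1) \<and> Comp C p1 y = ?a \<and> Comp C p2 y = ?b"
    using H da by (simp add: hom_def)
  show "x = y" using ex hx hy by blast
qed (auto simp: is_pullback_def)

end

lemma regular_cat: "regular_category C \<Longrightarrow> category C"
  unfolding regular_category_def finitely_complete_def by blast

lemma kernel_mono:
  assumes R: "regular_category C" and w: "w \<in> Arr C" and kp: "kernel_pair C w p1 p2"
    and e: "is_coequaliser C p1 p2 e" and m: "hom C m (Cod C e) (Cod C w)" and me: "Comp C m e = w"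
    and x: "hom C x Z (Cod C e)" and y: "hom C y Z (Cod C e)" and mxy: "Comp C m x = Comp C m y"
  shows "x = y"
proof -
  interpret cat C using regular_cat[OF R] by unfold_locales
  have PB: "\<And>f g. f \<in> Arr C \<Longrightarrow> g \<in> Arr C \<Longrightarrow> Cod C f = Cod C g \<Longrightarrow> \<exists>p1 p2. is_pullback C f g p1 p2"
    and ST: "\<And>e g p1 p2. regular_epi C e \<Longrightarrow> is_pullback C e g p1 p2 \<Longrightarrow> regular_epi C p2"
    using R unfolding regular_category_def finitely_complete_def by blast+
  have ee: "p1 \<in> Arr C" "p2 \<in> Arr C" "e \<in> Arr C" "Dom C p1 = Dom C p2"
    "Cod C p1 = Dom C e" "Cod C p2 = Dom C e" "Comp C e p1 = Comp C e p2"
    using e unfolding is_coequaliser_def by blast+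
  have re: "regular_epi C e" using e unfolding regular_epi_def by blast
  have kk: "Comp C w p1 = Comp C w p2" and Ukp: "\<And>a b. a \<in> Arr C \<Longrightarrow> b \<in> Arr C \<Longrightarrow> Dom C a = Dom C b \<Longrightarrow> Cod C a = Dom C w \<Longrightarrow> Cod C b = Dom C w \<Longrightarrow>
        Comp C w a = Comp C w b \<Longrightarrow>
        (\<exists>!u. hom C u (Dom C a) (Dom C p1) \<and> Comp C p1 u = a \<and> Comp C p2 u = b)"
    and kd: "Cod C p1 = Dom C w"
    using kp unfolding kernel_pair_def is_pullback_def by blast+
  have mm: "m \<in> Arr C" "Dom C m = Cod C e" "Cod C m = Cod C w" using m by (auto simp: hom_def)
  have dw: "Dom C w = Dom C e" using ee kd by simp
  obtain r1 r2 where rp: "is_pullback C m m r1 r2" using PB[of m m] mm by blast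
  have rr: "r1 \<in> Arr C" "r2 \<in> Arr C" "Dom C r1 = Dom C r2" "Cod C r1 = Cod C e" "Cod C r2 = Cod C e"
    "Comp C m r1 = Comp C m r2"
    using rp mm unfolding is_pullback_def by auto
  have Ur: "\<And>a b. a \<in> Arr C \<Longrightarrow> b \<in> Arr C \<Longrightarrow> Dom C a = Dom C b \<Longrightarrow> Cod C a = Dom C m \<Longrightarrow> Cod C b = Dom C m \<Longrightarrow>
        Comp C m a = Comp C m b \<Longrightarrow>
        (\<exists>!u. hom C u (Dom C a) (Dom C r1) \<and> Comp C r1 u = a \<and> Comp C r2 u = b)"
    using rp unfolding is_pullback_def by blast
  obtain q1 q2 where qp: "is_pullback C e r1 q1 q2" using PB[of e r1] ee rr by auto
  have qq: "q1 \<in> Arr C" "q2 \<in> Arr C" "Dom C q1 = Dom C q2" "Cod C q1 = Dom C e" "Cod C q2 = Dom C r1"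
    "Comp C e q1 = Comp C r1 q2"
    using qp unfolding is_pullback_def by auto
  have rq2: "regular_epi C q2" using ST[OF re qp] .
  let ?t = "Comp C r2 q2"
  have tt: "?t \<in> Arr C" "Cod C ?t = Cod C e" "Dom C ?t = Dom C q2" using qq rr by auto
  obtain s1 s2 where sp: "is_pullback C e ?t s1 s2" using PB[of e ?t] ee tt by auto
  have ss: "s1 \<in> Arr C" "s2 \<in> Arr C" "Dom C s1 = Dom C s2" "Cod C s1 = Dom C e" "Cod C s2 = Dom C q2"
    "Comp C e s1 = Comp C ?t s2"
    using sp tt unfolding is_pullback_def by auto
  have rs2: "regular_epi C s2" using ST[OF re sp] .
  let ?a1 = "Comp C q1 s2"
  have a1: "?a1 \<in> Arr C" "Dom C ?a1 = Dom C s2" "Cod C ?a1 = Dom C e" using qq ss by auto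
  have "Comp C e ?a1 = Comp C (Comp C e q1) s2" by (rule assoc) (use qq ss ee in auto)
  also have "\<dots> = Comp C (Comp C r1 q2) s2" using qq by simp
  also have "\<dots> = Comp C r1 (Comp C q2 s2)" by (rule assoc[symmetric]) (use qq ss rr in auto)
  finally have ea1: "Comp C e ?a1 = Comp C r1 (Comp C q2 s2)" .
  have ea2: "Comp C e s1 = Comp C r2 (Comp C q2 s2)"
    unfolding ss(6) by (rule assoc[symmetric]) (use qq ss rr in auto)
  have "Comp C w ?a1 = Comp C (Comp C m e) ?a1" using me by simp
  also have "\<dots> = Comp C m (Comp C e ?a1)" by (rule assoc[symmetric]) (use a1 ee mm in auto)
  also have "\<dots> = Comp C m (Comp C r1 (Comp C q2 s2))" using ea1 by simp
  also have "\<dots> = Comp C (Comp C m r1) (Comp C q2 s2)" by (rule assoc) (use mm rr qq ss in auto)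
  also have "\<dots> = Comp C (Comp C m r2) (Comp C q2 s2)" using rr by simp
  also have "\<dots> = Comp C m (Comp C r2 (Comp C q2 s2))" by (rule assoc[symmetric]) (use mm rr qq ss in auto)
  also have "\<dots> = Comp C m (Comp C e s1)" using ea2 by simp
  also have "\<dots> = Comp C (Comp C m e) s1" by (rule assoc) (use ss ee mm in auto)
  also have "\<dots> = Comp C w s1" using me by simp
  finally have "Comp C w ?a1 = Comp C w s1" .
  then have "\<exists>!u. hom C u (Dom C ?a1) (Dom C p1) \<and> Comp C p1 u = ?a1 \<and> Comp C p2 u = s1"
    by (intro Ukp) (use a1 ss dw in auto)
  then obtain v where v: "hom C v (Dom C ?a1) (Dom C p1)" "Comp C p1 v = ?a1" "Comp C p2 v = s1"
    by blast
  have vv: "v \<in> Arr C" "Cod C v = Dom C p1" using v by (auto simp: hom_def)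
  have "Comp C e ?a1 = Comp C e (Comp C p1 v)" using v by simp
  also have "\<dots> = Comp C (Comp C e p1) v" by (rule assoc) (use vv ee in auto)
  also have "\<dots> = Comp C (Comp C e p2) v" using ee by simp
  also have "\<dots> = Comp C e (Comp C p2 v)" by (rule assoc[symmetric]) (use vv ee in auto)
  finally have "Comp C e ?a1 = Comp C e s1" using v by simp
  then have "Comp C r1 (Comp C q2 s2) = Comp C r2 (Comp C q2 s2)" using ea1 ea2 by simp
  moreover have "Comp C (Comp C r1 q2) s2 = Comp C r1 (Comp C q2 s2)" by (rule assoc[symmetric]) (use rr qq ss in auto)
  moreover have "Comp C (Comp C r2 q2) s2 = Comp C r2 (Comp C q2 s2)" by (rule assoc[symmetric]) (use rr qq ss in auto)
  ultimately have "Comp C (Comp C r1 q2) s2 = Comp C (Comp C r2 q2) s2" by simp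
  then have "Comp C r1 q2 = Comp C r2 q2"
    using regepi_epi[OF rs2] rr qq ss by auto
  then have r12: "r1 = r2" using regepi_epi[OF rq2] rr qq by auto
  have xx: "x \<in> Arr C" "y \<in> Arr C" "Dom C x = Dom C y" "Cod C x = Dom C m" "Cod C y = Dom C m"
    using x y mm by (auto simp: hom_def)
  have "\<exists>!u. hom C u (Dom C x) (Dom C r1) \<and> Comp C r1 u = x \<and> Comp C r2 u = y"
    by (rule Ur[OF xx mxy])
  then obtain u where u: "hom C u (Dom C x) (Dom C r1)" "Comp C r1 u = x" "Comp C r2 u = y"
    by blast
  show ?thesis using u r12 by simp
qed

lemma image_fact:
  assumes R: "regular_category C" and a: "a \<in> Arr C" and b: "b \<in> Arr C"
    and ab: "Dom C a = Dom C b" "Cod C a = Cod C b"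
  shows "\<exists>e m1 m2. regular_epi C e \<and> Dom C e = Dom C a \<and> hom C m1 (Cod C e) (Cod C a) \<and>
     hom C m2 (Cod C e) (Cod C a) \<and> jointly_monic C m1 m2 \<and> Comp C m1 e = a \<and> Comp C m2 e = b"
proof -
  interpret cat C using regular_cat[OF R] by unfold_locales
  have PB: "\<And>f g. f \<in> Arr C \<Longrightarrow> g \<in> Arr C \<Longrightarrow> Cod C f = Cod C g \<Longrightarrow> \<exists>p1 p2. is_pullback C f g p1 p2"
    and KC: "\<And>f p1 p2. kernel_pair C f p1 p2 \<Longrightarrow> \<exists>c. is_coequaliser C p1 p2 c"
    using R unfolding regular_category_def finitely_complete_def by blast+
  obtain T where T: "terminal C T" using R unfolding regular_category_def finitely_complete_def by blast
  have TU: "\<And>X. X \<in> Obj C \<Longrightarrow> \<exists>!u. hom C u X T" using T unfolding terminal_def by blast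
  let ?X = "Cod C a"
  obtain t where t: "hom C t ?X T" using TU[of ?X] arr_obj[OF a] by blast
  have tt: "t \<in> Arr C" "Dom C t = ?X" using t by (auto simp: hom_def)
  obtain pi1 pi2 where pp: "is_pullback C t t pi1 pi2" using PB[of t t] tt by blast
  have pi: "pi1 \<in> Arr C" "pi2 \<in> Arr C" "Dom C pi1 = Dom C pi2" "Cod C pi1 = ?X" "Cod C pi2 = ?X"
    using pp tt unfolding is_pullback_def by auto
  have Up: "\<And>x y. x \<in> Arr C \<Longrightarrow> y \<in> Arr C \<Longrightarrow> Dom C x = Dom C y \<Longrightarrow> Cod C x = Dom C t \<Longrightarrow> Cod C y = Dom C t \<Longrightarrow>
        Comp C t x = Comp C t y \<Longrightarrow>
        (\<exists>!u. hom C u (Dom C x) (Dom C pi1) \<and> Comp C pi1 u = x \<and> Comp C pi2 u = y)"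
    using pp unfolding is_pullback_def by blast
  have "Comp C t a = Comp C t b"
  proof -
    have "hom C (Comp C t a) (Dom C a) T" "hom C (Comp C t b) (Dom C a) T"
      using t a b ab by (auto simp: hom_def)
    then show ?thesis using TU[of "Dom C a"] arr_obj[OF a] by blast
  qed
  then have exw: "\<exists>!u. hom C u (Dom C a) (Dom C pi1) \<and> Comp C pi1 u = a \<and> Comp C pi2 u = b"
    by (intro Up) (use a b ab tt in auto)
  then obtain w where w: "hom C w (Dom C a) (Dom C pi1)" "Comp C pi1 w = a" "Comp C pi2 w = b"
    by blast
  have ww: "w \<in> Arr C" "Dom C w = Dom C a" "Cod C w = Dom C pi1" using w by (auto simp: hom_def)
  obtain p1 p2 where kp: "kernel_pair C w p1 p2" using PB[of w w] ww unfolding kernel_pair_def by blast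
  obtain e where e: "is_coequaliser C p1 p2 e" using KC[OF kp] by blast
  have ee: "e \<in> Arr C" "Cod C p1 = Dom C e" "p1 \<in> Arr C" "p2 \<in> Arr C"
    and Ue: "\<And>h. h \<in> Arr C \<Longrightarrow> Dom C h = Dom C e \<Longrightarrow> Comp C h p1 = Comp C h p2 \<Longrightarrow>
        (\<exists>!u. hom C u (Cod C e) (Cod C h) \<and> Comp C u e = h)"
    using e unfolding is_coequaliser_def by blast+
  have kk: "Comp C w p1 = Comp C w p2" "Cod C p1 = Dom C w"
    using kp unfolding kernel_pair_def is_pullback_def by blast+
  obtain m where m: "hom C m (Cod C e) (Cod C w)" "Comp C m e = w"
  proof -
    have "\<exists>!u. hom C u (Cod C e) (Cod C w) \<and> Comp C u e = w"
      by (intro Ue) (use ww kk ee in auto)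
    then show ?thesis using that by blast
  qed
  have mm: "m \<in> Arr C" "Dom C m = Cod C e" "Cod C m = Dom C pi1" using m ww by (auto simp: hom_def)
  have de: "Dom C e = Dom C a" using ee kk ww by simp
  let ?m1 = "Comp C pi1 m" and ?m2 = "Comp C pi2 m"
  have jm: "jointly_monic C ?m1 ?m2"
    unfolding jointly_monic_def
  proof (intro conjI allI impI)
    fix x y assume H: "x \<in> Arr C \<and> y \<in> Arr C \<and> Dom C x = Dom C y \<and> Cod C x = Dom C ?m1 \<and> Cod C y = Dom C ?m1 \<and>
        Comp C ?m1 x = Comp C ?m1 y \<and> Comp C ?m2 x = Comp C ?m2 y"
    have cx: "Cod C x = Cod C e" "Cod C y = Cod C e" using H mm pi by auto
    have xy: "x \<in> Arr C" "y \<in> Arr C" using H by auto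
    have "Comp C pi1 (Comp C m x) = Comp C ?m1 x" by (rule assoc) (use xy cx mm pi in auto)
    also have "\<dots> = Comp C ?m1 y" using H by blast
    also have "\<dots> = Comp C pi1 (Comp C m y)" by (rule assoc[symmetric]) (use xy cx mm pi in auto)
    finally have 1: "Comp C pi1 (Comp C m x) = Comp C pi1 (Comp C m y)" .
    have "Comp C pi2 (Comp C m x) = Comp C ?m2 x" by (rule assoc) (use xy cx mm pi in auto)
    also have "\<dots> = Comp C ?m2 y" using H by blast
    also have "\<dots> = Comp C pi2 (Comp C m y)" by (rule assoc[symmetric]) (use xy cx mm pi in auto)
    finally have 2: "Comp C pi2 (Comp C m x) = Comp C pi2 (Comp C m y)" .
    note 1 2
    have "Comp C m x = Comp C m y"
      by (rule jm_eq[OF pullback_jm[OF pp] _ _ _ _ _ 1 2]) (use H mm cx pi xy in auto)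
    moreover have "hom C x (Dom C x) (Cod C e)" "hom C y (Dom C x) (Cod C e)"
      using H cx by (auto simp: hom_def)
    ultimately show "x = y"
      using kernel_mono[OF R ww(1) kp e m(1) m(2)] by blast
  qed (use pi mm in auto)
  have "Comp C ?m1 e = Comp C pi1 (Comp C m e)" by (rule assoc[symmetric]) (use mm pi ee in auto)
  then have m1e: "Comp C ?m1 e = a" using m w by simp
  have "Comp C ?m2 e = Comp C pi2 (Comp C m e)" by (rule assoc[symmetric]) (use mm pi ee in auto)
  then have "Comp C ?m2 e = b" using m w by simp
  note m1e this
  moreover have "hom C ?m1 (Cod C e) (Cod C a)" "hom C ?m2 (Cod C e) (Cod C a)"
    using pi mm ab by (auto simp: hom_def)
  moreover have "regular_epi C e" using e unfolding regular_epi_def by blast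
  ultimately show ?thesis using jm de by blast
qed

theorem proposition2p11:
  fixes C :: "('o, 'a) cat" and N :: "'a set" and A :: 'o
    and F G :: "'a \<times> 'a" and f g :: 'a
  assumes "star_regular C N"
    and "property_star C N"
    and "kernel_star_on C N A F"
    and "kernel_star_on C N A G"
    and "star_le C F G"
    and "is_coequaliser C (fst F) (snd F) f"
    and "is_coequaliser C (fst G) (snd G) g"
  shows "(\<exists>M. image_star C f G M)
    \<and> (\<forall>M. image_star C f G M \<longrightarrow> kernel_star_on C N (Cod C f) M)
    \<and> (\<exists>!q. hom C q (Cod C f) (Cod C g) \<and> Comp C q f = g)
    \<and> (\<forall>q M. hom C q (Cod C f) (Cod C g) \<and> Comp C q f = g \<and> image_star C f G M
         \<longrightarrow> is_coequaliser C (fst M) (snd M) q)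
    \<and> (\<forall>M c. image_star C f G M \<and> is_coequaliser C (fst M) (snd M) c
         \<longrightarrow> iso_obj C (Cod C g) (Cod C c))"
proof -
  note A = assms
  have R: "regular_category C" using A(1) unfolding star_regular_def by blast
  interpret cat C using regular_cat[OF R] by unfold_locales
  obtain h where h: "hom C h (Dom C (fst F)) (Dom C (fst G))" "Comp C (fst G) h = fst F"
    "Comp C (snd G) h = snd F" using A(5) unfolding star_le_def by blast
  have Fc: "fst F \<in> Arr C" "snd F \<in> Arr C" "f \<in> Arr C" "Dom C (fst F) = Dom C (snd F)"
    "Cod C (fst F) = Dom C f" "Cod C (snd F) = Dom C f" "Comp C f (fst F) = Comp C f (snd F)"
    and Uf: "\<And>k. k \<in> Arr C \<Longrightarrow> Dom C k = Dom C f \<Longrightarrow> Comp C k (fst F) = Comp C k (snd F) \<Longrightarrow>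
        (\<exists>!u. hom C u (Cod C f) (Cod C k) \<and> Comp C u f = k)"
    using A(6) unfolding is_coequaliser_def by blast+
  have Gc: "fst G \<in> Arr C" "snd G \<in> Arr C" "g \<in> Arr C" "Dom C (fst G) = Dom C (snd G)"
    "Cod C (fst G) = Dom C g" "Cod C (snd G) = Dom C g" "Comp C g (fst G) = Comp C g (snd G)"
    and Ug: "\<And>k. k \<in> Arr C \<Longrightarrow> Dom C k = Dom C g \<Longrightarrow> Comp C k (fst G) = Comp C k (snd G) \<Longrightarrow>
        (\<exists>!u. hom C u (Cod C g) (Cod C k) \<and> Comp C u g = k)"
    using A(7) unfolding is_coequaliser_def by blast+
  have hh: "h \<in> Arr C" "Dom C h = Dom C (fst F)" "Cod C h = Dom C (fst G)" using h by (auto simp: hom_def)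
  have "Cod C (fst F) = Cod C (fst G)" using h(2)[symmetric] hh Gc by simp
  then have dfg: "Dom C f = Dom C g" using Fc Gc by simp
  have P1: "\<exists>M. image_star C f G M"
  proof -
    have "\<exists>e m1 m2. regular_epi C e \<and> Dom C e = Dom C (Comp C f (fst G)) \<and> hom C m1 (Cod C e) (Cod C (Comp C f (fst G))) \<and>
     hom C m2 (Cod C e) (Cod C (Comp C f (fst G))) \<and> jointly_monic C m1 m2 \<and> Comp C m1 e = Comp C f (fst G) \<and> Comp C m2 e = Comp C f (snd G)"
      by (rule image_fact[OF R]) (use Fc Gc dfg in auto)
    then obtain e m1 m2 where em: "regular_epi C e" "Dom C e = Dom C (Comp C f (fst G))"
      "hom C m1 (Cod C e) (Cod C (Comp C f (fst G)))" "hom C m2 (Cod C e) (Cod C (Comp C f (fst G)))"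
      "jointly_monic C m1 m2" "Comp C m1 e = Comp C f (fst G)" "Comp C m2 e = Comp C f (snd G)"
      by blast
    show ?thesis unfolding image_star_def
      by (rule exI[of _ "(m1, m2)"], rule exI[of _ e]) (use em Fc Gc dfg in auto)
  qed
  have P2: "\<forall>M. image_star C f G M \<longrightarrow> kernel_star_on C N (Cod C f) M"
    using A(2-6) unfolding property_star_def by blast
  have gF: "Comp C g (fst F) = Comp C g (snd F)"
  proof -
    have "Comp C g (fst F) = Comp C g (Comp C (fst G) h)" using h by simp
    also have "\<dots> = Comp C (Comp C g (fst G)) h" by (rule assoc) (use hh Gc in auto)
    also have "\<dots> = Comp C (Comp C g (snd G)) h" using Gc by simp
    also have "\<dots> = Comp C g (Comp C (snd G) h)" by (rule assoc[symmetric]) (use hh Gc in auto)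
    also have "\<dots> = Comp C g (snd F)" using h by simp
    finally show ?thesis .
  qed
  have P3: "\<exists>!q. hom C q (Cod C f) (Cod C g) \<and> Comp C q f = g"
    by (intro Uf) (use Gc dfg gF in auto)
  have P4: "\<forall>q M. hom C q (Cod C f) (Cod C g) \<and> Comp C q f = g \<and> image_star C f G M
         \<longrightarrow> is_coequaliser C (fst M) (snd M) q"
  proof (intro allI impI)
    fix q M assume H: "hom C q (Cod C f) (Cod C g) \<and> Comp C q f = g \<and> image_star C f G M"
    have qq: "q \<in> Arr C" "Dom C q = Cod C f" "Cod C q = Cod C g" "Comp C q f = g"
      using H by (auto simp: hom_def)
    obtain e where e: "regular_epi C e" "Dom C e = Dom C (fst G)"
      "hom C (fst M) (Cod C e) (Cod C f)" "hom C (snd M) (Cod C e) (Cod C f)"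
      "Comp C (fst M) e = Comp C f (fst G)" "Comp C (snd M) e = Comp C f (snd G)"
      using H unfolding image_star_def by blast
    have ea: "e \<in> Arr C" using regepi_arr[OF e(1)] .
    have mm: "fst M \<in> Arr C" "snd M \<in> Arr C" "Dom C (fst M) = Cod C e" "Dom C (snd M) = Cod C e"
      "Cod C (fst M) = Cod C f" "Cod C (snd M) = Cod C f" using e by (auto simp: hom_def)
    have gfG: "Dom C f = Cod C (fst G)" "Dom C f = Cod C (snd G)" using Gc dfg by auto
    have key: "\<And>k. k \<in> Arr C \<Longrightarrow> Dom C k = Cod C f \<Longrightarrow> Comp C (Comp C k f) (fst G) = Comp C (Comp C k (fst M)) e
       \<and> Comp C (Comp C k f) (snd G) = Comp C (Comp C k (snd M)) e"
    proof -
      fix k assume k: "k \<in> Arr C" "Dom C k = Cod C f"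
      have "Comp C (Comp C k f) (fst G) = Comp C k (Comp C f (fst G))" by (rule assoc[symmetric]) (use k Fc Gc gfG in auto)
      also have "\<dots> = Comp C k (Comp C (fst M) e)" using e(5) by simp
      also have "\<dots> = Comp C (Comp C k (fst M)) e" by (rule assoc) (use k mm ea in auto)
      finally have 1: "Comp C (Comp C k f) (fst G) = Comp C (Comp C k (fst M)) e" .
      have "Comp C (Comp C k f) (snd G) = Comp C k (Comp C f (snd G))" by (rule assoc[symmetric]) (use k Fc Gc gfG in auto)
      also have "\<dots> = Comp C k (Comp C (snd M) e)" using e(6) by simp
      also have "\<dots> = Comp C (Comp C k (snd M)) e" by (rule assoc) (use k mm ea in auto)
      finally show "Comp C (Comp C k f) (fst G) = Comp C (Comp C k (fst M)) e
       \<and> Comp C (Comp C k f) (snd G) = Comp C (Comp C k (snd M)) e" using 1 by blast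
    qed
    have qm: "Comp C q (fst M) = Comp C q (snd M)"
    proof (rule regepi_epi[OF e(1)])
      show "Comp C (Comp C q (fst M)) e = Comp C (Comp C q (snd M)) e"
        using key[OF qq(1) qq(2)] qq(4) Gc(7) by metis
    qed (use qq mm in auto)
    show "is_coequaliser C (fst M) (snd M) q"
      unfolding is_coequaliser_def
    proof (intro conjI allI impI)
      fix k assume k: "k \<in> Arr C \<and> Dom C k = Dom C q \<and> Comp C k (fst M) = Comp C k (snd M)"
      have kf: "Comp C k f \<in> Arr C" "Dom C (Comp C k f) = Dom C g" "Cod C (Comp C k f) = Cod C k"
        using k qq Fc dfg by auto
      have "Comp C (Comp C k f) (fst G) = Comp C (Comp C k f) (snd G)"
        using key[of k] k qq by simp
      then obtain u where u: "hom C u (Cod C g) (Cod C k)" "Comp C u g = Comp C k f"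
        and uu: "\<And>u'. hom C u' (Cod C g) (Cod C k) \<Longrightarrow> Comp C u' g = Comp C k f \<Longrightarrow> u' = u"
        using Ug[OF kf(1) kf(2) \<open>Comp C (Comp C k f) (fst G) = Comp C (Comp C k f) (snd G)\<close>] kf(3) by auto
      have ua: "u \<in> Arr C" "Dom C u = Cod C g" "Cod C u = Cod C k" using u by (auto simp: hom_def)
      have uq: "Comp C u q = k"
      proof (rule coeq_epi[OF A(6)])
        have "Comp C (Comp C u q) f = Comp C u (Comp C q f)" by (rule assoc[symmetric]) (use qq ua Fc in auto)
        then show "Comp C (Comp C u q) f = Comp C k f" using u qq by simp
      qed (use ua qq k in auto)
      show "\<exists>!u. hom C u (Cod C q) (Cod C k) \<and> Comp C u q = k"
      proof (rule ex1I[of _ u])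
        show "hom C u (Cod C q) (Cod C k) \<and> Comp C u q = k" using u uq qq by auto
      next
        fix u' assume u': "hom C u' (Cod C q) (Cod C k) \<and> Comp C u' q = k"
        have u'a: "u' \<in> Arr C" "Dom C u' = Cod C q" using u' by (auto simp: hom_def)
        have "Comp C u' g = Comp C u' (Comp C q f)" using qq by simp
        also have "\<dots> = Comp C (Comp C u' q) f" by (rule assoc) (use qq u'a Fc in auto)
        finally have "Comp C u' g = Comp C k f" using u' by simp
        then show "u' = u" using uu u' qq by auto
      qed
    qed (use mm qq qm in auto)
  qed
  have P5: "\<forall>M c. image_star C f G M \<and> is_coequaliser C (fst M) (snd M) c
         \<longrightarrow> iso_obj C (Cod C g) (Cod C c)"
  proof (intro allI impI)
    fix M c assume H: "image_star C f G M \<and> is_coequaliser C (fst M) (snd M) c"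
    obtain q where q: "hom C q (Cod C f) (Cod C g)" "Comp C q f = g" using P3 by blast
    have "is_coequaliser C (fst M) (snd M) q" using P4 q H by blast
    then have "iso_obj C (Cod C q) (Cod C c)" using coeq_iso H by blast
    then show "iso_obj C (Cod C g) (Cod C c)" using q by (auto simp: hom_def)
  qed
  show ?thesis using P1 P2 P3 P4 P5 by blast
qed

end
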